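(* Let $G$ be a graph and $(x,y)\in E(G)$ with $d_x=d_y=d$. Let $\Delta_G(x,y)=N_G(x)\cap N_G(y)$, $Q_G(x)=N_G(x)\setminus\Delta_G(x,y)$ and $Q_G(y)=N_G(y)\setminus\Delta_G(x,y)$. Then $\kappa(x,y)=\frac{|\Delta_G(x,y)|}{d}$ if and only if there is a perfect matching between $Q_G(x)$ and $Q_G(y)$, i.e. a bijection $\sigma:Q_G(x)\to Q_G(y)$ with $(a,\sigma(a))\in E(G)$ for all $a\in Q_G(x)$.
   Context: Graphs are locally finite and unweighted. $d_G$ is the shortest-path metric, $N_G(v)$ the neighbour set and $d_v$ the degree of $v$; $m_v$ is the uniform probability measure on $N_G(v)$, and for an edge $(x,y)$, $\kappa(x,y)=1-W_1(m_x,m_y)$, where $W_1$ is the Wasserstein-1 (transportation) distance with respect to $d_G$. Note that $y\in Q_G(x)$ and $x\in Q_G(y)$. *)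

theory Defs
  imports Complex_Main "HOL-Library.Extended_Nat"
begin

text \<open>A graph on vertex type 'a is given by an edge relation E, assumed symmetric,
irreflexive and locally finite in the theorem.\<close>

definition nbrs :: "('a \<Rightarrow> 'a \<Rightarrow> bool) \<Rightarrow> 'a \<Rightarrow> 'a set" where
  "nbrs E v = {u. E v u}"

definition deg :: "('a \<Rightarrow> 'a \<Rightarrow> bool) \<Rightarrow> 'a \<Rightarrow> nat" where
  "deg E v = card (nbrs E v)"

definition gdist :: "('a \<Rightarrow> 'a \<Rightarrow> bool) \<Rightarrow> 'a \<Rightarrow> 'a \<Rightarrow> enat" where
  "gdist E u v = (if \<exists>n p. p (0::nat) = u \<and> p n = v \<and> (\<forall>i<n. E (p i) (p (Suc i)))
     then enat (LEAST n. \<exists>p. p (0::nat) = u \<and> p n = v \<and> (\<forall>i<n. E (p i) (p (Suc i))))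
     else \<infinity>)"

definition unif_nbr :: "('a \<Rightarrow> 'a \<Rightarrow> bool) \<Rightarrow> 'a \<Rightarrow> 'a \<Rightarrow> real" where
  "unif_nbr E v u = (if u \<in> nbrs E v then 1 / real (deg E v) else 0)"

definition couplings :: "'a set \<Rightarrow> ('a \<Rightarrow> real) \<Rightarrow> 'a set \<Rightarrow> ('a \<Rightarrow> real) \<Rightarrow> ('a \<Rightarrow> 'a \<Rightarrow> real) set" where
  "couplings A mu B nu = {pi. (\<forall>u v. 0 \<le> pi u v) \<and>
      (\<forall>u v. pi u v \<noteq> 0 \<longrightarrow> u \<in> A \<and> v \<in> B) \<and>
      (\<forall>u. (\<Sum>v\<in>B. pi u v) = mu u) \<and>
      (\<forall>v. (\<Sum>u\<in>A. pi u v) = nu v)}"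

text \<open>Pairs in the support of a plan at infinite distance are excluded (cost would be infinite);
for the neighbourhoods of an edge all distances are finite.\<close>
definition W1 :: "('a \<Rightarrow> 'a \<Rightarrow> bool) \<Rightarrow> 'a set \<Rightarrow> ('a \<Rightarrow> real) \<Rightarrow> 'a set \<Rightarrow> ('a \<Rightarrow> real) \<Rightarrow> real" where
  "W1 E A mu B nu = Inf {(\<Sum>(u,v)\<in>A \<times> B. pi u v * real (the_enat (gdist E u v))) | pi.
      pi \<in> couplings A mu B nu \<and> (\<forall>u v. pi u v \<noteq> 0 \<longrightarrow> gdist E u v \<noteq> \<infinity>)}"

definition kappa :: "('a \<Rightarrow> 'a \<Rightarrow> bool) \<Rightarrow> 'a \<Rightarrow> 'a \<Rightarrow> real" where
  "kappa E x y = 1 - W1 E (nbrs E x) (unif_nbr E x) (nbrs E y) (unif_nbr E y)"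

definition Delta :: "('a \<Rightarrow> 'a \<Rightarrow> bool) \<Rightarrow> 'a \<Rightarrow> 'a \<Rightarrow> 'a set" where
  "Delta E x y = nbrs E x \<inter> nbrs E y"

definition Qset :: "('a \<Rightarrow> 'a \<Rightarrow> bool) \<Rightarrow> 'a \<Rightarrow> 'a \<Rightarrow> 'a set" where
  "Qset E x y = nbrs E x - Delta E x y"

end

theory Submission
  imports Defs
begin


lemma hall_aux:
  fixes R :: "'a \<Rightarrow> 'b \<Rightarrow> bool"
  assumes "card A = n" "finite A" "\<forall>a\<in>A. finite {b. R a b}"
    "\<forall>S\<subseteq>A. card S \<le> card {b. \<exists>a\<in>S. R a b}"
  shows "\<exists>\<sigma>. inj_on \<sigma> A \<and> (\<forall>a\<in>A. R a (\<sigma> a))"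
  using assms
proof (induction n arbitrary: A R rule: less_induct)
  case (less n A R)
  note fin = less.prems(2) and finR = less.prems(3) and hc = less.prems(4)
  have finN: "finite {b. \<exists>a\<in>S. R a b}" if "S \<subseteq> A" for S
  proof -
    have "{b. \<exists>a\<in>S. R a b} = (\<Union>a\<in>S. {b. R a b})" by auto
    moreover have "finite S" using that fin finite_subset by blast
    ultimately show ?thesis using that finR by auto
  qed
  show ?case
  proof (cases "\<exists>S. S \<noteq> {} \<and> S \<subset> A \<and> card {b. \<exists>a\<in>S. R a b} \<le> card S")
    case True
    then obtain S where S: "S \<noteq> {}" "S \<subset> A" "card {b. \<exists>a\<in>S. R a b} \<le> card S" by blast
    define NS where "NS = {b. \<exists>a\<in>S. R a b}"
    have finS: "finite S" using S fin finite_subset by blast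
    have cS: "card S < n" using S fin less.prems(1) psubset_card_mono by blast
    obtain s1 where s1: "inj_on s1 S" "\<forall>a\<in>S. R a (s1 a)"
      using less.IH[OF cS refl finS, of R] S finR hc by auto
    define R2 where "R2 a b = (R a b \<and> b \<notin> NS)" for a b
    have cA2: "card (A - S) < n" using S fin less.prems(1)
      by (metis Diff_subset card_Diff_subset card_gt_0_iff diff_less finS finite_subset psubset_imp_subset subset_empty)
    have hc2: "\<forall>T\<subseteq>A - S. card T \<le> card {b. \<exists>a\<in>T. R2 a b}"
    proof (intro allI impI)
      fix T assume T: "T \<subseteq> A - S"
      have eq: "{b. \<exists>a\<in>T. R2 a b} = {b. \<exists>a\<in>T \<union> S. R a b} - NS" unfolding R2_def NS_def by auto
      have sub: "NS \<subseteq> {b. \<exists>a\<in>T \<union> S. R a b}" unfolding NS_def by auto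
      have TS: "T \<union> S \<subseteq> A" using T S by auto
      have fT: "finite T" using T fin finite_subset by blast
      have "card (T \<union> S) = card T + card S" using T fT finS by (subst card_Un_disjoint) auto
      moreover have "card (T \<union> S) \<le> card {b. \<exists>a\<in>T \<union> S. R a b}" using hc TS by blast
      moreover have "card NS \<le> card S" using S NS_def by simp
      moreover have "card ({b. \<exists>a\<in>T \<union> S. R a b} - NS) = card {b. \<exists>a\<in>T \<union> S. R a b} - card NS"
        using sub finN[OF TS] by (meson card_Diff_subset finite_subset)
      ultimately show "card T \<le> card {b. \<exists>a\<in>T. R2 a b}" unfolding eq by linarith
    qed
    have finR2: "\<forall>a\<in>A - S. finite {b. R2 a b}" using finR unfolding R2_def by auto
    obtain s2 where s2: "inj_on s2 (A - S)" "\<forall>a\<in>A - S. R2 a (s2 a)"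
      using less.IH[OF cA2 refl _ finR2 hc2] fin by auto
    define sg where "sg a = (if a \<in> S then s1 a else s2 a)" for a
    have "inj_on sg A"
    proof (rule inj_onI)
      fix u v assume uv: "u \<in> A" "v \<in> A" "sg u = sg v"
      show "u = v"
      proof (cases "u \<in> S"; cases "v \<in> S")
        assume "u \<in> S" "v \<in> S" then show ?thesis using uv s1 by (auto simp: sg_def inj_on_def)
      next
        assume "u \<notin> S" "v \<notin> S" then show ?thesis using uv s2 by (auto simp: sg_def inj_on_def)
      next
        assume a: "u \<in> S" "v \<notin> S"
        then have "sg u \<in> NS" using s1 by (auto simp: sg_def NS_def)
        moreover have "sg v \<notin> NS" using a uv(1,2) s2(2) unfolding sg_def R2_def by simp
        ultimately show ?thesis using uv by simp
      next
        assume a: "u \<notin> S" "v \<in> S"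
        then have "sg v \<in> NS" using s1 by (auto simp: sg_def NS_def)
        moreover have "sg u \<notin> NS" using a uv(1,2) s2(2) unfolding sg_def R2_def by simp
        ultimately show ?thesis using uv by simp
      qed
    qed
    moreover have "\<forall>a\<in>A. R a (sg a)" using s1 s2 by (auto simp: sg_def R2_def)
    ultimately show ?thesis by blast
  next
    case False
    show ?thesis
    proof (cases "A = {}")
      case True then show ?thesis by auto
    next
      case ne: False
      then obtain a where a: "a \<in> A" by blast
      have "card {a} \<le> card {b. \<exists>a'\<in>{a}. R a' b}" using hc a by blast
      then have "card {b. R a b} \<ge> 1" by simp
      then have "{b. R a b} \<noteq> {}" by (intro notI) simp
      then obtain b where b: "R a b" by blast
      define R' where "R' u v = (R u v \<and> v \<noteq> b)" for u v
      have cA': "card (A - {a}) < n" using card_Diff1_less[OF fin a] less.prems(1) by simp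
      have hc': "\<forall>T\<subseteq>A - {a}. card T \<le> card {b. \<exists>a\<in>T. R' a b}"
      proof (intro allI impI)
        fix T assume T: "T \<subseteq> A - {a}"
        show "card T \<le> card {b. \<exists>a\<in>T. R' a b}"
        proof (cases "T = {}")
          case True then show ?thesis by simp
        next
          case Tne: False
          have "T \<subset> A" using T a by auto
          moreover have "\<not> (T \<noteq> {} \<and> T \<subset> A \<and> card {b. \<exists>a\<in>T. R a b} \<le> card T)" using False by blast
          ultimately have lt: "card T < card {b. \<exists>a\<in>T. R a b}" using Tne by linarith
          have eq: "{b. \<exists>a\<in>T. R' a b} = {b. \<exists>a\<in>T. R a b} - {b}" unfolding R'_def by auto
          have "card ({b. \<exists>a\<in>T. R a b} - {b}) \<ge> card {b. \<exists>a\<in>T. R a b} - 1"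
            by (simp add: card_Diff_singleton_if)
          then show ?thesis unfolding eq using lt by linarith
        qed
      qed
      have finR': "\<forall>u\<in>A - {a}. finite {v. R' u v}" using finR unfolding R'_def by auto
      obtain s where s: "inj_on s (A - {a})" "\<forall>u\<in>A - {a}. R' u (s u)"
        using less.IH[OF cA' refl _ finR' hc'] fin by auto
      define sg where "sg = s(a := b)"
      have "inj_on sg A"
      proof (rule inj_onI)
        fix u v assume uv: "u \<in> A" "v \<in> A" "sg u = sg v"
        show "u = v"
        proof (cases "u = a"; cases "v = a")
          assume "u \<noteq> a" "v \<noteq> a" then show ?thesis using uv s(1) unfolding sg_def inj_on_def by simp
        next
          assume "u = a" "v \<noteq> a" then show ?thesis using uv s(2) unfolding sg_def R'_def by auto
        next
          assume "u \<noteq> a" "v = a" then show ?thesis using uv s(2) unfolding sg_def R'_def by auto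
        qed simp
      qed
      moreover have "\<forall>u\<in>A. R u (sg u)" using s b unfolding sg_def R'_def by auto
      ultimately show ?thesis by blast
    qed
  qed
qed



lemma sum_if_sub: "finite B \<Longrightarrow> C \<subseteq> B \<Longrightarrow> (\<Sum>v\<in>B. if v\<in>C then f v else 0) = sum f C"
  by (simp add: sum.If_cases Int_absorb1 Int_commute)

lemma cost_lb:
  fixes p c :: "'a \<Rightarrow> 'a \<Rightarrow> real"
  assumes fin: "finite Dl" "finite Qx" "finite Qy"
    and disj: "Dl \<inter> Qx = {}" "Dl \<inter> Qy = {}"
    and ST: "S \<subseteq> Qx" "T \<subseteq> Qy"
    and nn: "\<And>u v. 0 \<le> p u v"
    and rows: "\<And>u. u \<in> Dl \<union> Qx \<Longrightarrow> (\<Sum>v\<in>Dl \<union> Qy. p u v) = m"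
    and cols: "\<And>v. v \<in> Dl \<union> Qy \<Longrightarrow> (\<Sum>u\<in>Dl \<union> Qx. p u v) = m"
    and cb: "\<And>u v. u \<in> Dl \<union> Qx \<Longrightarrow> v \<in> Dl \<union> Qy \<Longrightarrow> p u v \<noteq> 0 \<Longrightarrow>
        c u v \<ge> (if u\<in>Qx then 1 else 0) + (if u\<in>S \<and> v\<in>Qy-T then 1 else 0) + (if u\<in>Dl \<and> v\<in>Qy then 1 else 0)"
  shows "(\<Sum>u\<in>Dl \<union> Qx. \<Sum>v\<in>Dl \<union> Qy. p u v * c u v) \<ge> m * card Qx + m * (real (card S) - real (card T))"
proof -
  define L where "L u v = (if u\<in>Qx then 1 else 0) + (if u\<in>S \<and> v\<in>Qy-T then 1 else 0) + (if u\<in>Dl \<and> v\<in>Qy then (1::real) else 0)" for u v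
  have finS: "finite S" "finite T" using ST fin finite_subset by auto
  have "(\<Sum>u\<in>Dl \<union> Qx. \<Sum>v\<in>Dl \<union> Qy. p u v * L u v) \<le> (\<Sum>u\<in>Dl \<union> Qx. \<Sum>v\<in>Dl \<union> Qy. p u v * c u v)"
  proof (intro sum_mono)
    fix u v assume "u \<in> Dl \<union> Qx" "v \<in> Dl \<union> Qy"
    then show "p u v * L u v \<le> p u v * c u v"
      using cb[of u v] nn[of u v] unfolding L_def
      by (cases "p u v = 0") (auto intro!: mult_left_mono)
  qed
  moreover have "(\<Sum>u\<in>Dl \<union> Qx. \<Sum>v\<in>Dl \<union> Qy. p u v * L u v) =
     (\<Sum>u\<in>Dl \<union> Qx. \<Sum>v\<in>Dl \<union> Qy. (if u\<in>Qx then p u v else 0)) +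
     (\<Sum>u\<in>Dl \<union> Qx. \<Sum>v\<in>Dl \<union> Qy. (if u\<in>S \<and> v\<in>Qy-T then p u v else 0)) +
     (\<Sum>u\<in>Dl \<union> Qx. \<Sum>v\<in>Dl \<union> Qy. (if u\<in>Dl \<and> v\<in>Qy then p u v else 0))"
  proof -
    have "\<And>u v. p u v * L u v = (if u\<in>Qx then p u v else 0) + (if u\<in>S \<and> v\<in>Qy-T then p u v else 0) + (if u\<in>Dl \<and> v\<in>Qy then p u v else 0)"
      by (simp add: L_def algebra_simps)
    then show ?thesis by (simp only: sum.distrib)
  qed
  moreover have "(\<Sum>u\<in>Dl \<union> Qx. \<Sum>v\<in>Dl \<union> Qy. (if u\<in>Qx then p u v else 0)) = m * card Qx"
  proof -
    have "(\<Sum>u\<in>Dl \<union> Qx. \<Sum>v\<in>Dl \<union> Qy. (if u\<in>Qx then p u v else 0)) = (\<Sum>u\<in>Dl \<union> Qx. if u \<in> Qx then m else 0)"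
      using rows by (intro sum.cong) auto
    also have "\<dots> = (\<Sum>u\<in>Qx. m)" using fin by (simp add: sum.If_cases Int_absorb1)
    finally show ?thesis by simp
  qed
  moreover have A: "(\<Sum>u\<in>Dl \<union> Qx. \<Sum>v\<in>Dl \<union> Qy. (if u\<in>S \<and> v\<in>Qy-T then p u v else 0)) = (\<Sum>u\<in>S. \<Sum>v\<in>Qy-T. p u v)"
  proof -
    have "(\<Sum>u\<in>Dl \<union> Qx. \<Sum>v\<in>Dl \<union> Qy. (if u\<in>S \<and> v\<in>Qy-T then p u v else 0)) = (\<Sum>u\<in>Dl \<union> Qx. if u \<in> S then (\<Sum>v\<in>Qy-T. p u v) else 0)"
    proof (intro sum.cong refl)
      fix u show "(\<Sum>v\<in>Dl \<union> Qy. (if u\<in>S \<and> v\<in>Qy-T then p u v else 0)) = (if u \<in> S then (\<Sum>v\<in>Qy-T. p u v) else 0)"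
        using sum_if_sub[of "Dl\<union>Qy" "Qy-T" "p u"] fin by (cases "u \<in> S") auto
    qed
    also have "\<dots> = (\<Sum>u\<in>S. \<Sum>v\<in>Qy-T. p u v)" using fin ST by (intro sum_if_sub) auto
    finally show ?thesis .
  qed
  moreover have B: "(\<Sum>u\<in>Dl \<union> Qx. \<Sum>v\<in>Dl \<union> Qy. (if u\<in>Dl \<and> v\<in>Qy then p u v else 0)) = (\<Sum>u\<in>Dl. \<Sum>v\<in>Qy. p u v)"
  proof -
    have "(\<Sum>u\<in>Dl \<union> Qx. \<Sum>v\<in>Dl \<union> Qy. (if u\<in>Dl \<and> v\<in>Qy then p u v else 0)) = (\<Sum>u\<in>Dl \<union> Qx. if u \<in> Dl then (\<Sum>v\<in>Qy. p u v) else 0)"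
      using fin by (intro sum.cong refl) (auto intro!: sum_if_sub)
    also have "\<dots> = (\<Sum>u\<in>Dl. \<Sum>v\<in>Qy. p u v)" using fin by (intro sum_if_sub) auto
    finally show ?thesis .
  qed
  moreover have key: "(\<Sum>u\<in>S. \<Sum>v\<in>Qy-T. p u v) + (\<Sum>u\<in>Dl. \<Sum>v\<in>Qy. p u v) \<ge> m * (real (card S) - real (card T))"
  proof -
    have r1: "(\<Sum>u\<in>S. \<Sum>v\<in>Dl \<union> Qy. p u v) = m * card S"
    proof -
      have "(\<Sum>u\<in>S. \<Sum>v\<in>Dl \<union> Qy. p u v) = (\<Sum>u\<in>S. m)" using rows ST by (intro sum.cong) auto
      then show ?thesis by simp
    qed
    have r2: "(\<Sum>v\<in>Dl \<union> Qy. p u v) = (\<Sum>v\<in>Dl. p u v) + (\<Sum>v\<in>T. p u v) + (\<Sum>v\<in>Qy-T. p u v)" for u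
    proof -
      have "Qy = T \<union> (Qy - T)" using ST by auto
      then have "(\<Sum>v\<in>Qy. p u v) = (\<Sum>v\<in>T. p u v) + (\<Sum>v\<in>Qy-T. p u v)"
        using fin finS sum.subset_diff[of T Qy "p u"] ST(2) by simp
      then show ?thesis using fin disj by (simp add: sum.union_disjoint)
    qed
    have t1: "(\<Sum>u\<in>S. \<Sum>v\<in>T. p u v) \<le> m * card T"
    proof -
      have "(\<Sum>u\<in>S. \<Sum>v\<in>T. p u v) \<le> (\<Sum>u\<in>Dl \<union> Qx. \<Sum>v\<in>T. p u v)"
        using fin ST nn by (intro sum_mono2) (auto intro: sum_nonneg)
      also have "\<dots> = (\<Sum>v\<in>T. \<Sum>u\<in>Dl \<union> Qx. p u v)" by (rule sum.swap)
      also have "\<dots> = m * card T"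
      proof -
        have "(\<Sum>v\<in>T. \<Sum>u\<in>Dl \<union> Qx. p u v) = (\<Sum>v\<in>T. m)" using cols ST by (intro sum.cong) auto
        then show ?thesis by simp
      qed
      finally show ?thesis .
    qed
    have t2: "(\<Sum>u\<in>S. \<Sum>v\<in>Dl. p u v) \<le> (\<Sum>u\<in>Dl. \<Sum>v\<in>Qy. p u v)"
    proof -
      have "(\<Sum>u\<in>S. \<Sum>v\<in>Dl. p u v) \<le> (\<Sum>u\<in>Qx. \<Sum>v\<in>Dl. p u v)"
        using fin ST nn by (intro sum_mono2) (auto intro: sum_nonneg)
      also have "\<dots> = (\<Sum>v\<in>Dl. \<Sum>u\<in>Qx. p u v)" by (rule sum.swap)
      also have "\<dots> = (\<Sum>v\<in>Dl. m - (\<Sum>u\<in>Dl. p u v))"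
      proof (intro sum.cong refl)
        fix v assume "v \<in> Dl"
        then have "(\<Sum>u\<in>Dl \<union> Qx. p u v) = m" using cols by auto
        then show "(\<Sum>u\<in>Qx. p u v) = m - (\<Sum>u\<in>Dl. p u v)" using fin disj by (simp add: sum.union_disjoint)
      qed
      also have "\<dots> = m * card Dl - (\<Sum>v\<in>Dl. \<Sum>u\<in>Dl. p u v)" by (simp add: sum_subtractf)
      also have "\<dots> = m * card Dl - (\<Sum>u\<in>Dl. \<Sum>v\<in>Dl. p u v)" using sum.swap[of "\<lambda>v u. p u v" Dl Dl] by simp
      also have "\<dots> = (\<Sum>u\<in>Dl. m - (\<Sum>v\<in>Dl. p u v))" by (simp add: sum_subtractf)
      also have "\<dots> = (\<Sum>u\<in>Dl. \<Sum>v\<in>Qy. p u v)"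
      proof (intro sum.cong refl)
        fix u assume "u \<in> Dl"
        then have "(\<Sum>v\<in>Dl \<union> Qy. p u v) = m" using rows by auto
        then show "m - (\<Sum>v\<in>Dl. p u v) = (\<Sum>v\<in>Qy. p u v)" using fin disj by (simp add: sum.union_disjoint)
      qed
      finally show ?thesis .
    qed
    have "m * card S = (\<Sum>u\<in>S. \<Sum>v\<in>Dl. p u v) + (\<Sum>u\<in>S. \<Sum>v\<in>T. p u v) + (\<Sum>u\<in>S. \<Sum>v\<in>Qy-T. p u v)"
      using r1 r2 by (simp add: sum.distrib)
    then show ?thesis using t1 t2 by (simp add: right_diff_distrib)
  qed
  ultimately show ?thesis by linarith
qed

lemma gdist_refl: "gdist E u u = 0"
proof -
  have ex: "\<exists>n p. p (0::nat) = u \<and> p n = u \<and> (\<forall>i<n. E (p i) (p (Suc i)))"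
    by (rule exI[of _ 0], rule exI[of _ "\<lambda>_. u"]) simp
  have "(LEAST n. \<exists>p. p (0::nat) = u \<and> p n = u \<and> (\<forall>i<n. E (p i) (p (Suc i)))) = 0"
    by (rule Least_eq_0) (rule exI[of _ "\<lambda>_. u"], simp)
  then show ?thesis using ex unfolding gdist_def by (simp add: zero_enat_def)
qed

lemma gdist_edge:
  assumes "E u v" "u \<noteq> v" shows "gdist E u v = 1"
proof -
  define p where "p = (\<lambda>i::nat. if i = 0 then u else v)"
  have w: "p 0 = u \<and> p 1 = v \<and> (\<forall>i<1. E (p i) (p (Suc i)))" using assms by (simp add: p_def)
  then have ex: "\<exists>n p. p (0::nat) = u \<and> p n = v \<and> (\<forall>i<n. E (p i) (p (Suc i)))" by blast
  have "(LEAST n. \<exists>p. p (0::nat) = u \<and> p n = v \<and> (\<forall>i<n. E (p i) (p (Suc i)))) = 1"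
  proof (rule Least_equality)
    show "\<exists>p. p (0::nat) = u \<and> p 1 = v \<and> (\<forall>i<1. E (p i) (p (Suc i)))" using w by blast
  next
    fix m assume "\<exists>p. p (0::nat) = u \<and> p m = v \<and> (\<forall>i<m. E (p i) (p (Suc i)))"
    then show "1 \<le> m" using assms(2) by (cases m) auto
  qed
  then show ?thesis using ex unfolding gdist_def by (simp add: one_enat_def)
qed

lemma gdist_walk:
  assumes "gdist E u v \<noteq> \<infinity>"
  shows "\<exists>p. p 0 = u \<and> p (the_enat (gdist E u v)) = v \<and> (\<forall>i<the_enat (gdist E u v). E (p i) (p (Suc i)))"
proof -
  have ex: "\<exists>n p. p (0::nat) = u \<and> p n = v \<and> (\<forall>i<n. E (p i) (p (Suc i)))"
    using assms unfolding gdist_def by (auto split: if_splits)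
  then have g: "the_enat (gdist E u v) = (LEAST n. \<exists>p. p (0::nat) = u \<and> p n = v \<and> (\<forall>i<n. E (p i) (p (Suc i))))"
    unfolding gdist_def by simp
  show ?thesis unfolding g by (rule LeastI_ex[OF ex])
qed

lemma gdist_ge1:
  assumes "gdist E u v \<noteq> \<infinity>" "u \<noteq> v" shows "1 \<le> real (the_enat (gdist E u v))"
proof -
  obtain p where p: "p 0 = u" "p (the_enat (gdist E u v)) = v" using gdist_walk[OF assms(1)] by blast
  then have "the_enat (gdist E u v) \<noteq> 0" using assms(2) by (metis p(1) p(2))
  then show ?thesis by simp
qed

lemma gdist_ge2:
  assumes "gdist E u v \<noteq> \<infinity>" "u \<noteq> v" "\<not> E u v" shows "2 \<le> real (the_enat (gdist E u v))"
proof -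
  obtain p where p: "p 0 = u" "p (the_enat (gdist E u v)) = v" "\<forall>i<the_enat (gdist E u v). E (p i) (p (Suc i))"
    using gdist_walk[OF assms(1)] by blast
  then have "the_enat (gdist E u v) \<noteq> 0" using assms(2) by (metis p(1) p(2))
  moreover have "the_enat (gdist E u v) \<noteq> 1" using p assms(3) by (metis One_nat_def lessI)
  ultimately show ?thesis by simp
qed

lemma gdist3:
  assumes "E u x" "E x y" "E y v" shows "gdist E u v \<noteq> \<infinity>"
proof -
  define p where "p = (\<lambda>i::nat. if i = 0 then u else if i = 1 then x else if i = 2 then y else v)"
  have "p 0 = u \<and> p 3 = v \<and> (\<forall>i<3. E (p i) (p (Suc i)))"
    using assms by (auto simp: p_def less_Suc_eq numeral_3_eq_3)
  then have "\<exists>n p. p (0::nat) = u \<and> p n = v \<and> (\<forall>i<n. E (p i) (p (Suc i)))" by blast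
  then show ?thesis unfolding gdist_def by simp
qed

theorem theorem4p2:
  fixes E :: "'a \<Rightarrow> 'a \<Rightarrow> bool" and x y :: 'a and d :: nat
  assumes sym: "\<forall>u v. E u v \<longrightarrow> E v u"
    and irrefl: "\<forall>u. \<not> E u u"
    and locfin: "\<forall>u. finite (nbrs E u)"
    and edge: "E x y"
    and dx: "deg E x = d" and dy: "deg E y = d"
  shows "kappa E x y = real (card (Delta E x y)) / real d \<longleftrightarrow>
    (\<exists>\<sigma>. bij_betw \<sigma> (Qset E x y) (Qset E y x) \<and> (\<forall>a\<in>Qset E x y. E a (\<sigma> a)))"
proof -
  define Nx where "Nx = nbrs E x"
  define Ny where "Ny = nbrs E y"
  define Dl where "Dl = Delta E x y"
  define Qx where "Qx = Qset E x y"
  define Qy where "Qy = Qset E y x"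
  define c where "c u v = real (the_enat (gdist E u v))" for u v
  have finx: "finite Nx" and finy: "finite Ny" using locfin by (auto simp: Nx_def Ny_def)
  have NxD: "Nx = Dl \<union> Qx" and NyD: "Ny = Dl \<union> Qy"
    by (auto simp: Nx_def Ny_def Dl_def Qx_def Qy_def Qset_def Delta_def)
  have disj: "Dl \<inter> Qx = {}" "Dl \<inter> Qy = {}" "Qx \<inter> Qy = {}"
    by (auto simp: Dl_def Qx_def Qy_def Qset_def Delta_def)
  have fin: "finite Dl" "finite Qx" "finite Qy" using finx finy NxD NyD by auto
  have cNx: "card Nx = d" using dx by (simp add: deg_def Nx_def)
  have cNy: "card Ny = d" using dy by (simp add: deg_def Ny_def)
  have cx: "card Dl + card Qx = d" using cNx NxD fin disj by (simp add: card_Un_disjoint)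
  have cy: "card Dl + card Qy = d" using cNy NyD fin disj by (simp add: card_Un_disjoint)
  have yNx: "y \<in> Nx" using edge by (simp add: Nx_def nbrs_def)
  have dpos: "d > 0" using yNx finx cNx card_gt_0_iff by blast
  have unx: "unif_nbr E x u = (if u \<in> Nx then 1 / real d else 0)" for u
    by (simp add: unif_nbr_def Nx_def dx)
  have uny: "unif_nbr E y u = (if u \<in> Ny then 1 / real d else 0)" for u
    by (simp add: unif_nbr_def Ny_def dy)
  define C where "C = {(\<Sum>(u,v)\<in>Nx \<times> Ny. pi u v * real (the_enat (gdist E u v))) | pi.
      pi \<in> couplings Nx (unif_nbr E x) Ny (unif_nbr E y) \<and> (\<forall>u v. pi u v \<noteq> 0 \<longrightarrow> gdist E u v \<noteq> \<infinity>)}"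
  have W: "W1 E Nx (unif_nbr E x) Ny (unif_nbr E y) = Inf C" unfolding W1_def C_def ..
  have kap: "kappa E x y = 1 - Inf C" unfolding kappa_def W Nx_def[symmetric] Ny_def[symmetric] ..
  have LB: "z \<ge> (1 / real d) * card Qx + (1 / real d) * (real (card S) - real (card {b. \<exists>a\<in>S. E a b \<and> b \<in> Qy}))"
    if z: "z \<in> C" and S: "S \<subseteq> Qx" for z S
  proof -
    define T where "T = {b. \<exists>a\<in>S. E a b \<and> b \<in> Qy}"
    obtain pi where pi: "pi \<in> couplings Nx (unif_nbr E x) Ny (unif_nbr E y)"
      "\<forall>u v. pi u v \<noteq> 0 \<longrightarrow> gdist E u v \<noteq> \<infinity>"
      and zeq: "z = (\<Sum>(u,v)\<in>Nx \<times> Ny. pi u v * real (the_enat (gdist E u v)))"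
      using z unfolding C_def by blast
    have zeq2: "z = (\<Sum>u\<in>Dl \<union> Qx. \<Sum>v\<in>Dl \<union> Qy. pi u v * c u v)"
      unfolding zeq c_def NxD[symmetric] NyD[symmetric] by (simp add: sum.cartesian_product)
    have "(\<Sum>u\<in>Dl \<union> Qx. \<Sum>v\<in>Dl \<union> Qy. pi u v * c u v) \<ge> (1/real d) * card Qx + (1/real d) * (real (card S) - real (card T))"
    proof (rule cost_lb[OF fin disj(1,2) S])
      show "T \<subseteq> Qy" by (auto simp: T_def)
      show "0 \<le> pi u v" for u v using pi(1) by (simp add: couplings_def)
      show "(\<Sum>v\<in>Dl \<union> Qy. pi u v) = 1 / real d" if "u \<in> Dl \<union> Qx" for u
        using pi(1) that unx[of u] NxD NyD by (simp add: couplings_def)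
      show "(\<Sum>u\<in>Dl \<union> Qx. pi u v) = 1 / real d" if "v \<in> Dl \<union> Qy" for v
        using pi(1) that uny[of v] NxD NyD by (simp add: couplings_def)
      fix u v assume uv: "u \<in> Dl \<union> Qx" "v \<in> Dl \<union> Qy" "pi u v \<noteq> 0"
      have fd: "gdist E u v \<noteq> \<infinity>" using pi(2) uv(3) by blast
      have c0: "0 \<le> c u v" by (simp add: c_def)
      show "c u v \<ge> (if u\<in>Qx then 1 else 0) + (if u\<in>S \<and> v\<in>Qy-T then 1 else 0) + (if u\<in>Dl \<and> v\<in>Qy then 1 else 0)"
      proof (cases "u \<in> Qx")
        case True
        then have "u \<notin> Dl" "u \<noteq> v" using disj uv(2) by auto
        show ?thesis
        proof (cases "u\<in>S \<and> v\<in>Qy-T")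
          case True
          then have "\<not> E u v" unfolding T_def by auto
          then show ?thesis using gdist_ge2[OF fd \<open>u \<noteq> v\<close>] True \<open>u \<notin> Dl\<close> by (simp add: c_def)
        next
          case False
          then show ?thesis using gdist_ge1[OF fd \<open>u \<noteq> v\<close>] \<open>u \<in> Qx\<close> \<open>u \<notin> Dl\<close> by (simp only: c_def if_False if_True) simp
        qed
      next
        case False
        then have uD: "u \<in> Dl" "u \<notin> S" using uv(1) S by auto
        show ?thesis
        proof (cases "v \<in> Qy")
          case True
          then have "u \<noteq> v" using uD disj by auto
          then show ?thesis using gdist_ge1[OF fd] True uD False by (simp add: c_def)
        next
          case False
          then show ?thesis using c0 \<open>u \<notin> Qx\<close> uD by simp
        qed
      qed
    qed
    then show ?thesis unfolding zeq2 T_def .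
  qed
  have Cne: "C \<noteq> {}"
  proof -
    define pi where "pi u v = unif_nbr E x u * unif_nbr E y v" for u v
    have sy: "(\<Sum>v\<in>Ny. unif_nbr E y v) = 1" using cNy dpos by (simp add: uny)
    have sx: "(\<Sum>u\<in>Nx. unif_nbr E x u) = 1" using cNx dpos by (simp add: unx)
    have "pi \<in> couplings Nx (unif_nbr E x) Ny (unif_nbr E y)"
      unfolding couplings_def pi_def
      using dpos by (auto simp: unx uny sum_distrib_left[symmetric] sum_distrib_right[symmetric] sx sy cNx cNy)
    moreover have "\<forall>u v. pi u v \<noteq> 0 \<longrightarrow> gdist E u v \<noteq> \<infinity>"
    proof (intro allI impI)
      fix u v assume "pi u v \<noteq> 0"
      then have "u \<in> Nx" "v \<in> Ny" by (auto simp: pi_def unx uny split: if_splits)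
      then show "gdist E u v \<noteq> \<infinity>" using sym edge by (intro gdist3[of E u x y v]) (auto simp: Nx_def Ny_def nbrs_def)
    qed
    ultimately show ?thesis unfolding C_def by blast
  qed
  have cQxy: "card Qx = card Qy" using cx cy by simp
  have kapeq: "kappa E x y = real (card Dl) / real d \<longleftrightarrow> Inf C = real (card Qx) / real d"
  proof -
    have "real (card Dl) / real d = 1 - real (card Qx) / real d"
      using cx dpos by (simp add: field_simps flip: of_nat_add)
    then show ?thesis unfolding kap by linarith
  qed
  show ?thesis
    unfolding Dl_def[symmetric] Qx_def[symmetric] Qy_def[symmetric] kapeq
  proof
    assume inf: "Inf C = real (card Qx) / real d"
    show "\<exists>\<sigma>. bij_betw \<sigma> Qx Qy \<and> (\<forall>a\<in>Qx. E a (\<sigma> a))"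
    proof (rule ccontr)
      assume nob: "\<not> ?thesis"
      have "\<not> (\<forall>S\<subseteq>Qx. card S \<le> card {b. \<exists>a\<in>S. E a b \<and> b \<in> Qy})"
      proof
        assume hc: "\<forall>S\<subseteq>Qx. card S \<le> card {b. \<exists>a\<in>S. E a b \<and> b \<in> Qy}"
        have "\<forall>a\<in>Qx. finite {b. E a b \<and> b \<in> Qy}" using fin by auto
        then obtain s where s: "inj_on s Qx" "\<forall>a\<in>Qx. E a (s a) \<and> s a \<in> Qy"
          using hall_aux[OF refl fin(2), of "\<lambda>a b. E a b \<and> b \<in> Qy"] hc by auto
        have "s ` Qx \<subseteq> Qy" using s by auto
        moreover have "card (s ` Qx) = card Qy" using s(1) cQxy by (simp add: card_image)
        ultimately have "s ` Qx = Qy" using fin by (simp add: card_subset_eq)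
        then have "bij_betw s Qx Qy" using s(1) by (simp add: bij_betw_def)
        then show False using nob s by blast
      qed
      then obtain S where S: "S \<subseteq> Qx" "card S > card {b. \<exists>a\<in>S. E a b \<and> b \<in> Qy}" by auto
      have "\<forall>z\<in>C. z \<ge> real (card Qx) / real d + 1 / real d"
      proof
        fix z assume "z \<in> C"
        from LB[OF this S(1)] have "z \<ge> (1 / real d) * card Qx + (1 / real d) * (real (card S) - real (card {b. \<exists>a\<in>S. E a b \<and> b \<in> Qy}))" .
        moreover have "real (card S) - real (card {b. \<exists>a\<in>S. E a b \<and> b \<in> Qy}) \<ge> 1" using S(2) by linarith
        moreover have "1 / real d > 0" using dpos by simp
        ultimately have "(1 / real d) * 1 \<le> (1 / real d) * (real (card S) - real (card {b. \<exists>a\<in>S. E a b \<and> b \<in> Qy}))"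
          by (intro mult_left_mono) auto
        with \<open>z \<ge> _\<close> have "z \<ge> (1 / real d) * card Qx + (1 / real d) * 1" by linarith
        then show "z \<ge> real (card Qx) / real d + 1 / real d" by simp
      qed
      then have "Inf C \<ge> real (card Qx) / real d + 1 / real d" using Cne by (intro cInf_greatest) auto
      then show False using inf dpos by simp
    qed
  next
    assume "\<exists>\<sigma>. bij_betw \<sigma> Qx Qy \<and> (\<forall>a\<in>Qx. E a (\<sigma> a))"
    then obtain sg where bij: "bij_betw sg Qx Qy" and ed: "\<forall>a\<in>Qx. E a (sg a)" by blast
    have sgQ: "sg a \<in> Qy" if "a \<in> Qx" for a using bij that bij_betwE by blast
    define pi where "pi u v = (if u \<in> Dl \<and> v = u then 1 / real d else if u \<in> Qx \<and> v = sg u then 1 / real d else 0)" for u v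
    have rows: "(\<Sum>v\<in>Ny. pi u v) = unif_nbr E x u" for u
    proof -
      consider "u \<in> Dl" | "u \<in> Qx" | "u \<notin> Nx" using NxD by auto
      then show ?thesis
      proof cases
        case 1
        then have "u \<notin> Qx" using disj by auto
        then have "(\<Sum>v\<in>Ny. pi u v) = (\<Sum>v\<in>Ny. if v = u then 1 / real d else 0)"
          using 1 by (intro sum.cong) (auto simp: pi_def)
        then show ?thesis using 1 NxD NyD finx finy by (simp add: unx sum.delta)
      next
        case 2
        then have "u \<notin> Dl" using disj by auto
        then have "(\<Sum>v\<in>Ny. pi u v) = (\<Sum>v\<in>Ny. if v = sg u then 1 / real d else 0)"
          using 2 by (intro sum.cong) (auto simp: pi_def)
        then show ?thesis using 2 sgQ[OF 2] NxD NyD finx finy by (simp add: unx sum.delta)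
      next
        case 3
        then show ?thesis using NxD by (simp add: unx pi_def)
      qed
    qed
    have cols: "(\<Sum>u\<in>Nx. pi u v) = unif_nbr E y v" for v
    proof -
      consider "v \<in> Dl" | "v \<in> Qy" | "v \<notin> Ny" using NyD by auto
      then show ?thesis
      proof cases
        case 1
        have "(\<Sum>u\<in>Nx. pi u v) = (\<Sum>u\<in>Nx. if u = v then 1 / real d else 0)"
        proof (intro sum.cong refl)
          fix u assume "u \<in> Nx"
          show "pi u v = (if u = v then 1 / real d else 0)"
            using 1 sgQ disj by (auto simp: pi_def)
        qed
        then show ?thesis using 1 NxD NyD finx finy by (simp add: uny sum.delta)
      next
        case 2
        define a where "a = inv_into Qx sg v"
        have a: "a \<in> Qx" "sg a = v" using bij 2 unfolding a_def
          by (auto intro: inv_into_into bij_betw_inv_into_right simp: bij_betw_def)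
        have "(\<Sum>u\<in>Nx. pi u v) = (\<Sum>u\<in>Nx. if u = a then 1 / real d else 0)"
        proof (intro sum.cong refl)
          fix u assume u: "u \<in> Nx"
          have "u \<in> Qx \<Longrightarrow> (v = sg u) = (u = a)" using bij a unfolding bij_betw_def inj_on_def by metis
          then show "pi u v = (if u = a then 1 / real d else 0)"
            using u 2 a(1) disj NxD by (auto simp: pi_def)
        qed
        then show ?thesis using 2 a NxD NyD finx finy by (simp add: uny sum.delta)
      next
        case 3
        have "pi u v = 0" if "u \<in> Nx" for u using 3 that NxD NyD sgQ by (auto simp: pi_def)
        then show ?thesis using 3 by (simp add: uny)
      qed
    qed
    have supp: "pi u v \<noteq> 0 \<Longrightarrow> (u \<in> Dl \<and> v = u) \<or> (u \<in> Qx \<and> v = sg u)" for u v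
      by (auto simp: pi_def split: if_splits)
    have irr: "a \<noteq> sg a" if "a \<in> Qx" for a using irrefl ed that by metis
    have coup: "pi \<in> couplings Nx (unif_nbr E x) Ny (unif_nbr E y)"
      unfolding couplings_def using rows cols supp NxD NyD sgQ
      by (auto simp: pi_def)
    have fd: "\<forall>u v. pi u v \<noteq> 0 \<longrightarrow> gdist E u v \<noteq> \<infinity>"
    proof (intro allI impI)
      fix u v assume "pi u v \<noteq> 0"
      then consider "u \<in> Dl \<and> v = u" | "u \<in> Qx \<and> v = sg u" using supp by blast
      then show "gdist E u v \<noteq> \<infinity>"
        by cases (auto simp: gdist_refl gdist_edge ed irr)
    qed
    have cost: "(\<Sum>(u,v)\<in>Nx \<times> Ny. pi u v * real (the_enat (gdist E u v))) = real (card Qx) / real d"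
    proof -
      have "(\<Sum>(u,v)\<in>Nx \<times> Ny. pi u v * real (the_enat (gdist E u v))) = (\<Sum>u\<in>Nx. \<Sum>v\<in>Ny. pi u v * real (the_enat (gdist E u v)))"
        by (simp add: sum.cartesian_product)
      also have "\<dots> = (\<Sum>u\<in>Nx. \<Sum>v\<in>Ny. if u \<in> Qx \<and> v = sg u then 1 / real d else 0)"
      proof (intro sum.cong refl)
        fix u v assume u: "u \<in> Nx"
        show "pi u v * real (the_enat (gdist E u v)) = (if u \<in> Qx \<and> v = sg u then 1 / real d else 0)"
        proof (cases "pi u v = 0")
          case True then show ?thesis using u disj irr by (auto simp: pi_def split: if_splits)
        next
          case False
          then consider "u \<in> Dl \<and> v = u" | "u \<in> Qx \<and> v = sg u" using supp by blast
          then show ?thesis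
          proof cases
            case 1 then show ?thesis using disj by (auto simp: gdist_refl zero_enat_def)
          next
            case 2 then show ?thesis using disj ed irr by (auto simp: gdist_edge pi_def one_enat_def)
          qed
        qed
      qed
      also have "\<dots> = (\<Sum>u\<in>Nx. if u \<in> Qx then 1 / real d else 0)"
      proof (intro sum.cong refl)
        fix u assume "u \<in> Nx"
        show "(\<Sum>v\<in>Ny. if u \<in> Qx \<and> v = sg u then 1 / real d else 0) = (if u \<in> Qx then 1 / real d else 0)"
          using sgQ NyD finy by (cases "u \<in> Qx") auto
      qed
      also have "\<dots> = real (card Qx) / real d"
        using finx NxD by (simp add: sum.If_cases Int_absorb1)
      finally show ?thesis .
    qed
    have inC: "real (card Qx) / real d \<in> C" unfolding C_def using coup fd cost[symmetric] by blast
    show "Inf C = real (card Qx) / real d"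
    proof (rule cInf_eq_minimum[OF inC])
      fix z assume "z \<in> C"
      from LB[OF this, of "{}"] show "real (card Qx) / real d \<le> z" by simp
    qed
  qed
qed

end
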